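(* Goldfish (the propose-vote-merge protocol with fork-choice $\mathrm{GHOST}_{eph}$, without subsampling) is not $(\tau,\pi)$-asynchrony-resilient for any $\tau>\pi\ge2$.
   Context: Setting. There are $n$ validators; a probabilistic polynomial-time adversary adaptively corrupts validators (permanently; corrupted validators behave arbitrarily) and adaptively decides which honest validators are awake or asleep. Rounds, synchronized clocks; slot $t$ = rounds $3\Delta t,\dots,3\Delta t+3\Delta-1$. Under synchrony, messages of honest validators reach all awake honest validators within $\Delta$ rounds; asleep validators receive queued messages upon waking. An honest validator waking up at a round in $(3\Delta(t-1)+2\Delta,3\Delta t+2\Delta]$ buffers messages and becomes active at round $3\Delta t+2\Delta$. Each slot has a unique proposer (single secret leader election, each validator chosen with probability $1/n$). $H_t$ = honest validators active at round $3\Delta t+\Delta$, $A_t$ = adversarial validators at round $3\Delta t+\Delta$, $H_{s,t}=\bigcup_{i=s}^tH_i$ ($H_i=\emptyset$ for $i<0$). An honest proposal from slot $t$ is the block of an honest proposer active at round $3\Delta t$. Fork-choice $\mathrm{GHOST}_{eph}(\mathcal V,t)$: remove from the view $\mathcal V$ all votes of validators with two different votes for the same slot, then remove all votes from slots $<t-1$, then run GHOST: starting at genesis, repeatedly move to the child with most remaining votes for it or its descendants (deterministic tie-break) until a leaf, which is output. Propose-vote-merge protocol with fork-choice $\mathrm{FC}$ (every validator votes every slot): each validator keeps a view, a buffer collecting received blocks/votes and a canonical chain; at round $3\Delta t$ the proposer merges its buffer into its view $\mathcal V_p$, creates a block $B$ with parent $\mathrm{FC}(\mathcal V_p,t)$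 and gossips it with the view $\mathcal V_p\cup\{B\}$ (during the first $\Delta$ rounds of the slot); a validator receiving this proposal during rounds $[3\Delta t,3\Delta t+\Delta]$ merges the proposed view into its own; at round $3\Delta t+\Delta$ every active validator sets its canonical chain to $\mathrm{FC}(\mathcal V_i,t)$ and gossips a slot-$t$ vote for it; at round $3\Delta t+2\Delta$ every validator merges its buffer into its view. Definitions. $\tau$-sleepiness at slot $t$: $|H_{t-1}|>|A_t\cup(H_{t-\tau,t-2}\setminus H_{t-1})|$. A temporary period of asynchrony (TPA) is an interval $(t_1,t_2)$ of consecutive slots in which synchrony does not hold; it is a $\pi$-TPA if $t_2-t_1\le\pi$. We consider a network that is synchronous except during one TPA. For $\tau>\pi$ (or $\tau=\pi=\infty$) an execution is $(\tau,\pi)$-compliant if its TPA is a $\pi$-TPA $(t_1,t_2)$ and: $\tau$-sleepiness holds at every slot $t\notin(t_1,t_2]$; $|H_{t_1}\setminus A_t|>|A_t\cup(H_{t-\tau,t-1}\setminus H_{t_1})|$ for every $t\in(t_1,t_2+1]$; and all validators of $H_{t_1}$ are awake at round $3\Delta t_1+2\Delta$. A validator is aware at a round $r$ in slots $(t_1,t_2]$ if it is active at $r$ and belongs to $H_{t_1}$; at other rounds it is aware if it is active. An execution satisfies asynchrony resilience if every honest proposal from a slot $t\le t_1$ is in the canonical chain of every aware validator at every round $\ge3\Delta t+\Delta$. A protocol is $(\tau,\pi)$-asynchrony-resilient if all $(\tau,\pi)$-compliant executions satisfy asynchrony resilience. *)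

theory Defs
  imports Main "HOL-Library.Sublist"
begin

text \<open>A block is identified by its full chain from genesis: a list of entries
  (slot, nonce).  Genesis is the empty list; the parent of b @ [e] is b.
  Honest proposers use nonce 0; the nonce lets a corrupted proposer equivocate.\<close>
type_synonym blk = "(nat \<times> nat) list"

text \<open>Basic messages: blocks and votes (Vt validator slot block).\<close>
datatype bmsg = Blk blk | Vt nat nat blk

text \<open>Gossiped messages: basic messages, or a proposal = block together with a view.\<close>
datatype msg = Basic bmsg | Prop blk "bmsg set"

fun content :: "msg \<Rightarrow> bmsg set" where
  "content (Basic m) = {m}"
| "content (Prop b W) = insert (Blk b) W"

definition votes :: "bmsg set \<Rightarrow> (nat \<times> nat \<times> blk) set" where
  "votes V = {(u, s, b). Vt u s b \<in> V}"

definition equivocators :: "bmsg set \<Rightarrow> nat set" where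
  "equivocators V = {u. \<exists>s b b'. (u, s, b) \<in> votes V \<and> (u, s, b') \<in> votes V \<and> b \<noteq> b'}"

definition eph_votes :: "bmsg set \<Rightarrow> nat \<Rightarrow> (nat \<times> nat \<times> blk) set" where
  "eph_votes V t = {(u, s, b). (u, s, b) \<in> votes V \<and> u \<notin> equivocators V \<and> t \<le> Suc s}"

definition block_tree :: "bmsg set \<Rightarrow> blk set" where
  "block_tree V = insert [] {b. \<exists>b'. Blk b' \<in> V \<and> prefix b b'}"

definition weight :: "bmsg set \<Rightarrow> nat \<Rightarrow> blk \<Rightarrow> nat" where
  "weight V t b = card {(u, s, c). (u, s, c) \<in> eph_votes V t \<and> prefix b c}"

definition children :: "bmsg set \<Rightarrow> blk \<Rightarrow> blk set" where
  "children V c = {b \<in> block_tree V. \<exists>x. b = c @ [x]}"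

definition heaviest :: "bmsg set \<Rightarrow> nat \<Rightarrow> blk \<Rightarrow> blk set" where
  "heaviest V t c = {b \<in> children V c. \<forall>b' \<in> children V c. weight V t b' \<le> weight V t b}"

text \<open>tb is the deterministic tie-breaking rule (choice among the heaviest children).\<close>
fun ghost_walk :: "(blk set \<Rightarrow> blk) \<Rightarrow> bmsg set \<Rightarrow> nat \<Rightarrow> nat \<Rightarrow> blk \<Rightarrow> blk" where
  "ghost_walk tb V t 0 c = c"
| "ghost_walk tb V t (Suc f) c =
     (if children V c = {} then c else ghost_walk tb V t f (tb (heaviest V t c)))"

definition ghost_eph :: "(blk set \<Rightarrow> blk) \<Rightarrow> bmsg set \<Rightarrow> nat \<Rightarrow> blk" where
  "ghost_eph tb V t = ghost_walk tb V t (card (block_tree V)) []"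

record hst =
  hview :: "bmsg set"
  hbuf :: "bmsg set"
  hchain :: "blk option"   \<comment> \<open>canonical chain; None while not active / not yet set since becoming active\<close>

definition hinit :: hst where
  "hinit = \<lparr>hview = {}, hbuf = {}, hchain = None\<rparr>"

definition is_prop_slot :: "nat \<Rightarrow> msg \<Rightarrow> bool" where
  "is_prop_slot t m = (\<exists>b W. m = Prop b W \<and> b \<noteq> [] \<and> fst (last b) = t)"

text \<open>One round r of honest validator v: given whether v is active at r and the set M of
  messages received at r, returns the new state and the messages gossiped at r.
  Incoming messages are processed first, then the scheduled action of the round.\<close>
definition hstep :: "nat \<Rightarrow> (blk set \<Rightarrow> blk) \<Rightarrow> (nat \<Rightarrow> nat) \<Rightarrow> nat \<Rightarrow> bool \<Rightarrow> nat
                      \<Rightarrow> msg set \<Rightarrow> hst \<Rightarrow> hst \<times> msg set" where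
  "hstep \<Delta> tb ld v a r M s =
    (let t = r div (3 * \<Delta>); k = r mod (3 * \<Delta>) in
     if \<not> a then (\<lparr>hview = hview s, hbuf = hbuf s \<union> \<Union> (content ` M), hchain = None\<rparr>, {})
     else
       (let P = (if k \<le> \<Delta> then {m \<in> M. is_prop_slot t m} else {});
            V1 = hview s \<union> \<Union> (content ` P);
            B1 = hbuf s \<union> \<Union> (content ` (M - P))
        in if k = 0 \<and> ld t = v then
             (let b = ghost_eph tb (V1 \<union> B1) t @ [(t, 0)];
                  V2 = insert (Blk b) (V1 \<union> B1)
              in (\<lparr>hview = V2, hbuf = {}, hchain = hchain s\<rparr>, {Prop b V2}))
           else if k = \<Delta> then
             (let c = ghost_eph tb V1 t
              in (\<lparr>hview = V1, hbuf = B1, hchain = Some c\<rparr>, {Basic (Vt v t c)}))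
           else if k = 2 * \<Delta> then
             (\<lparr>hview = V1 \<union> B1, hbuf = {}, hchain = hchain s\<rparr>, {})
           else (\<lparr>hview = V1, hbuf = B1, hchain = hchain s\<rparr>, {})))"

fun hrun :: "nat \<Rightarrow> (blk set \<Rightarrow> blk) \<Rightarrow> (nat \<Rightarrow> nat) \<Rightarrow> (nat \<Rightarrow> bool) \<Rightarrow> (nat \<Rightarrow> msg set)
              \<Rightarrow> nat \<Rightarrow> nat \<Rightarrow> hst \<times> msg set" where
  "hrun \<Delta> tb ld act rv v 0 = hstep \<Delta> tb ld v (act 0) 0 (rv 0) hinit"
| "hrun \<Delta> tb ld act rv v (Suc r) =
     hstep \<Delta> tb ld v (act (Suc r)) (Suc r) (rv (Suc r)) (fst (hrun \<Delta> tb ld act rv v r))"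

record exec =
  lead :: "nat \<Rightarrow> nat"            \<comment> \<open>proposer of each slot\<close>
  corr :: "nat \<Rightarrow> nat option"     \<comment> \<open>round at which a validator is corrupted (permanently)\<close>
  awake :: "nat \<Rightarrow> nat \<Rightarrow> bool"
  sent :: "nat \<Rightarrow> nat \<Rightarrow> msg set"  \<comment> \<open>messages gossiped by v at round r\<close>
  recv :: "nat \<Rightarrow> nat \<Rightarrow> msg set"  \<comment> \<open>messages delivered to v at round r\<close>

definition adv_at :: "exec \<Rightarrow> nat \<Rightarrow> nat \<Rightarrow> nat set" where
  "adv_at E n r = {v. v < n \<and> (\<exists>c. corr E v = Some c \<and> c \<le> r)}"

definition honest_at :: "exec \<Rightarrow> nat \<Rightarrow> nat \<Rightarrow> nat \<Rightarrow> bool" where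
  "honest_at E n v r = (v < n \<and> v \<notin> adv_at E n r)"

definition active :: "nat \<Rightarrow> exec \<Rightarrow> nat \<Rightarrow> nat \<Rightarrow> bool" where
  "active \<Delta> E v r =
    (\<exists>w \<le> r. (\<forall>r' \<in> {w..r}. awake E v r') \<and>
       (w = 0 \<or> (\<not> awake E v (w - 1) \<and> (\<exists>t. w \<le> 3*\<Delta>*t + 2*\<Delta> \<and> 3*\<Delta>*t + 2*\<Delta> \<le> r))))"

definition hist :: "exec \<Rightarrow> nat \<Rightarrow> (blk set \<Rightarrow> blk) \<Rightarrow> nat \<Rightarrow> nat \<Rightarrow> hst \<times> msg set" where
  "hist E \<Delta> tb v r = hrun \<Delta> tb (lead E) (active \<Delta> E v) (recv E v) v r"

text \<open>Basic messages / blocks / proposals gossiped by honest validators before round r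
  (the adversary may replay these).\<close>
definition honest_basic_before :: "exec \<Rightarrow> nat \<Rightarrow> nat \<Rightarrow> bmsg set" where
  "honest_basic_before E n r =
     \<Union> {content m | m u r'. r' < r \<and> honest_at E n u r' \<and> m \<in> sent E u r'}"

definition honest_blocks_before :: "exec \<Rightarrow> nat \<Rightarrow> nat \<Rightarrow> blk set" where
  "honest_blocks_before E n r = {b. \<exists>b'. Blk b' \<in> honest_basic_before E n r \<and> prefix b b'}"

text \<open>Unforgeability of signatures for messages sent by the adversary at round r.\<close>
definition auth_block :: "exec \<Rightarrow> nat \<Rightarrow> nat \<Rightarrow> nat \<Rightarrow> blk \<Rightarrow> bool" where
  "auth_block E n \<Delta> r b =
    (sorted_wrt (<) (map fst b) \<and>
     (\<forall>q s x. prefix (q @ [(s, x)]) b \<longrightarrow>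
        (lead E s \<in> adv_at E n r \<and> 3*\<Delta>*s \<le> r) \<or> q @ [(s, x)] \<in> honest_blocks_before E n r))"

fun auth_bmsg :: "exec \<Rightarrow> nat \<Rightarrow> nat \<Rightarrow> nat \<Rightarrow> bmsg \<Rightarrow> bool" where
  "auth_bmsg E n \<Delta> r (Blk b) = auth_block E n \<Delta> r b"
| "auth_bmsg E n \<Delta> r (Vt u s b) =
     ((u \<in> adv_at E n r \<and> 3*\<Delta>*s \<le> r) \<or> Vt u s b \<in> honest_basic_before E n r)"

fun auth_msg :: "exec \<Rightarrow> nat \<Rightarrow> nat \<Rightarrow> nat \<Rightarrow> msg \<Rightarrow> bool" where
  "auth_msg E n \<Delta> r (Basic m) = auth_bmsg E n \<Delta> r m"
| "auth_msg E n \<Delta> r (Prop b W) =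
     (finite W \<and> (\<forall>m \<in> insert (Blk b) W. auth_bmsg E n \<Delta> r m) \<and> b \<noteq> [] \<and>
      ((lead E (fst (last b)) \<in> adv_at E n r \<and> 3*\<Delta>*fst (last b) \<le> r) \<or>
       (\<exists>u r'. r' < r \<and> honest_at E n u r' \<and> Prop b W \<in> sent E u r')))"

text \<open>Valid execution of Goldfish (n validators, round length \<Delta>, tie-break tb), synchronous
  except during the TPA (t1,t2): messages gossiped by honest validators in a slot s with
  t1 < s < t2 carry no delivery guarantee.\<close>
definition valid_exec :: "nat \<Rightarrow> nat \<Rightarrow> (blk set \<Rightarrow> blk) \<Rightarrow> nat \<Rightarrow> nat \<Rightarrow> exec \<Rightarrow> bool" where
  "valid_exec n \<Delta> tb t1 t2 E =
    (0 < \<Delta> \<and> (\<forall>t. lead E t < n) \<and>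
     (\<forall>v r. \<not> v < n \<longrightarrow> sent E v r = {}) \<and>
     (\<forall>v r. honest_at E n v r \<longrightarrow> sent E v r = snd (hist E \<Delta> tb v r)) \<and>
     (\<forall>v r. v \<in> adv_at E n r \<longrightarrow> finite (sent E v r) \<and> (\<forall>m \<in> sent E v r. auth_msg E n \<Delta> r m)) \<and>
     (\<forall>v r. recv E v r \<subseteq> {m. \<exists>u r'. r' < r \<and> m \<in> sent E u r'}) \<and>
     (\<forall>u r m v r'. honest_at E n u r \<and> m \<in> sent E u r \<and>
        \<not> (t1 < r div (3*\<Delta>) \<and> r div (3*\<Delta>) < t2) \<and> v < n \<and> r + \<Delta> \<le> r' \<and> awake E v r'
        \<longrightarrow> (\<exists>r''. r < r'' \<and> r'' \<le> r' \<and> m \<in> recv E v r'')))"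

definition Hset :: "exec \<Rightarrow> nat \<Rightarrow> nat \<Rightarrow> nat \<Rightarrow> nat set" where
  "Hset E n \<Delta> t = {v. honest_at E n v (3*\<Delta>*t + \<Delta>) \<and> active \<Delta> E v (3*\<Delta>*t + \<Delta>)}"

definition Aset :: "exec \<Rightarrow> nat \<Rightarrow> nat \<Rightarrow> nat \<Rightarrow> nat set" where
  "Aset E n \<Delta> t = adv_at E n (3*\<Delta>*t + \<Delta>)"

definition Hi :: "exec \<Rightarrow> nat \<Rightarrow> nat \<Rightarrow> int \<Rightarrow> nat set" where
  "Hi E n \<Delta> i = (if i < 0 then {} else Hset E n \<Delta> (nat i))"

definition Hrange :: "exec \<Rightarrow> nat \<Rightarrow> nat \<Rightarrow> int \<Rightarrow> int \<Rightarrow> nat set" where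
  "Hrange E n \<Delta> lo hi = \<Union> {Hi E n \<Delta> i | i. lo \<le> i \<and> i \<le> hi}"

definition sleepy :: "exec \<Rightarrow> nat \<Rightarrow> nat \<Rightarrow> nat \<Rightarrow> nat \<Rightarrow> bool" where
  "sleepy E n \<Delta> \<tau> t =
    (card (Hi E n \<Delta> (int t - 1)) >
     card (Aset E n \<Delta> t \<union> (Hrange E n \<Delta> (int t - int \<tau>) (int t - 2) - Hi E n \<Delta> (int t - 1))))"

definition compliant :: "nat \<Rightarrow> nat \<Rightarrow> nat \<Rightarrow> nat \<Rightarrow> nat \<Rightarrow> nat \<Rightarrow> exec \<Rightarrow> bool" where
  "compliant n \<Delta> \<tau> \<pi> t1 t2 E =
    (t1 < t2 \<and> t2 - t1 \<le> \<pi> \<and>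
     (\<forall>t. 0 < t \<and> \<not> (t1 < t \<and> t \<le> t2) \<longrightarrow> sleepy E n \<Delta> \<tau> t) \<and>
     (\<forall>t. t1 < t \<and> t \<le> t2 + 1 \<longrightarrow>
        card (Hset E n \<Delta> t1 - Aset E n \<Delta> t) >
        card (Aset E n \<Delta> t \<union> (Hrange E n \<Delta> (int t - int \<tau>) (int t - 1) - Hset E n \<Delta> t1))) \<and>
     (\<forall>v \<in> Hset E n \<Delta> t1. awake E v (3*\<Delta>*t1 + 2*\<Delta>)))"

definition aware :: "exec \<Rightarrow> nat \<Rightarrow> nat \<Rightarrow> nat \<Rightarrow> nat \<Rightarrow> nat \<Rightarrow> nat \<Rightarrow> bool" where
  "aware E n \<Delta> t1 t2 v r =
    (honest_at E n v r \<and> active \<Delta> E v r \<and>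
     (t1 < r div (3*\<Delta>) \<and> r div (3*\<Delta>) \<le> t2 \<longrightarrow> v \<in> Hset E n \<Delta> t1))"

definition honest_proposal :: "exec \<Rightarrow> nat \<Rightarrow> nat \<Rightarrow> (blk set \<Rightarrow> blk) \<Rightarrow> nat \<Rightarrow> blk \<Rightarrow> bool" where
  "honest_proposal E n \<Delta> tb t b =
    (honest_at E n (lead E t) (3*\<Delta>*t) \<and> active \<Delta> E (lead E t) (3*\<Delta>*t) \<and>
     (\<exists>W. Prop b W \<in> snd (hist E \<Delta> tb (lead E t) (3*\<Delta>*t))))"

definition async_resilient_exec :: "nat \<Rightarrow> nat \<Rightarrow> (blk set \<Rightarrow> blk) \<Rightarrow> nat \<Rightarrow> nat \<Rightarrow> exec \<Rightarrow> bool" where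
  "async_resilient_exec n \<Delta> tb t1 t2 E =
    (\<forall>t b v r c. t \<le> t1 \<and> honest_proposal E n \<Delta> tb t b \<and> 3*\<Delta>*t + \<Delta> \<le> r \<and>
        aware E n \<Delta> t1 t2 v r \<and> hchain (fst (hist E \<Delta> tb v r)) = Some c \<longrightarrow> prefix b c)"

definition goldfish_async_resilient ::
    "nat \<Rightarrow> nat \<Rightarrow> (blk set \<Rightarrow> blk) \<Rightarrow> nat \<Rightarrow> nat \<Rightarrow> bool" where
  "goldfish_async_resilient n \<Delta> tb \<tau> \<pi> =
    (\<forall>E t1 t2. valid_exec n \<Delta> tb t1 t2 E \<and> compliant n \<Delta> \<tau> \<pi> t1 t2 E
        \<longrightarrow> async_resilient_exec n \<Delta> tb t1 t2 E)"

end

theory Submission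
  imports Defs
begin

definition PP :: "nat \<Rightarrow> nat \<Rightarrow> msg set \<Rightarrow> msg set" where
  "PP \<Delta> r M = (if r mod (3 * \<Delta>) \<le> \<Delta> then {m \<in> M. is_prop_slot (r div (3 * \<Delta>)) m} else {})"

lemma hstep_nl_eq:
  assumes "ld (r div (3*\<Delta>)) \<noteq> v"
  shows "hstep \<Delta> tb ld v True r M s =
    (if r mod (3*\<Delta>) = \<Delta> then
       (\<lparr>hview = hview s \<union> \<Union> (content ` PP \<Delta> r M), hbuf = hbuf s \<union> \<Union> (content ` (M - PP \<Delta> r M)),
         hchain = Some (ghost_eph tb (hview s \<union> \<Union> (content ` PP \<Delta> r M)) (r div (3*\<Delta>)))\<rparr>,
        {Basic (Vt v (r div (3*\<Delta>)) (ghost_eph tb (hview s \<union> \<Union> (content ` PP \<Delta> r M)) (r div (3*\<Delta>))))})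
     else if r mod (3*\<Delta>) = 2*\<Delta> then
       (\<lparr>hview = hview s \<union> \<Union> (content ` PP \<Delta> r M) \<union> (hbuf s \<union> \<Union> (content ` (M - PP \<Delta> r M))), hbuf = {},
         hchain = hchain s\<rparr>, {})
     else (\<lparr>hview = hview s \<union> \<Union> (content ` PP \<Delta> r M), hbuf = hbuf s \<union> \<Union> (content ` (M - PP \<Delta> r M)),
         hchain = hchain s\<rparr>, {}))"
  using assms unfolding hstep_def PP_def Let_def by simp

lemma PP_split: "\<Union> (content ` PP \<Delta> r M) \<union> \<Union> (content ` (M - PP \<Delta> r M)) = \<Union> (content ` M)"
  unfolding PP_def by auto

lemma hs_union:
  assumes "ld (r div (3*\<Delta>)) \<noteq> v"
  shows "hview (fst (hstep \<Delta> tb ld v True r M s)) \<union> hbuf (fst (hstep \<Delta> tb ld v True r M s))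
         = hview s \<union> hbuf s \<union> \<Union> (content ` M)"
  unfolding hstep_nl_eq[of ld r \<Delta> v tb M s, OF assms] using PP_split[of \<Delta> r M] by auto

lemma hs_mono:
  assumes "ld (r div (3*\<Delta>)) \<noteq> v"
  shows "hview s \<subseteq> hview (fst (hstep \<Delta> tb ld v True r M s))"
  unfolding hstep_nl_eq[of ld r \<Delta> v tb M s, OF assms] by auto

lemma hs_merge:
  assumes "ld (r div (3*\<Delta>)) \<noteq> v" "r mod (3*\<Delta>) = 2*\<Delta>" "0 < \<Delta>"
  shows "hview (fst (hstep \<Delta> tb ld v True r M s)) = hview s \<union> hbuf s \<union> \<Union> (content ` M)"
  unfolding hstep_nl_eq[of ld r \<Delta> v tb M s, OF assms(1)] using assms(2,3) PP_split[of \<Delta> r M] by auto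

lemma hs_out:
  assumes "ld (r div (3*\<Delta>)) \<noteq> v"
  shows "snd (hstep \<Delta> tb ld v True r M s) \<subseteq> {Basic (Vt v (r div (3*\<Delta>)) c) | c. True}"
    and "r mod (3*\<Delta>) \<noteq> \<Delta> \<Longrightarrow> snd (hstep \<Delta> tb ld v True r M s) = {}"
  unfolding hstep_nl_eq[of ld r \<Delta> v tb M s, OF assms] by auto

lemma hs_vote:
  assumes "ld (r div (3*\<Delta>)) \<noteq> v" "r mod (3*\<Delta>) = \<Delta>" "\<forall>m\<in>M. \<exists>x. m = Basic x"
  shows "hchain (fst (hstep \<Delta> tb ld v True r M s)) = Some (ghost_eph tb (hview s) (r div (3*\<Delta>)))"
proof -
  have "PP \<Delta> r M = {}" using assms(3) unfolding PP_def is_prop_slot_def by auto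
  then show ?thesis unfolding hstep_nl_eq[of ld r \<Delta> v tb M s, OF assms(1)] using assms(2) by simp
qed


definition advs :: "nat \<Rightarrow> nat \<Rightarrow> msg set" where
  "advs \<Delta> r = (if r = 3*\<Delta> then {Basic (Blk [(0,1)]), Basic (Vt 0 1 [(0,1)])} else {})"

definition deliv :: "nat \<Rightarrow> nat \<Rightarrow> (nat \<Rightarrow> hst \<times> msg set) \<Rightarrow> msg set" where
  "deliv \<Delta> r g = (if r = 0 then snd (g 0) else advs \<Delta> r) \<union>
     (if r div (3*\<Delta>) = 1 then {} else snd (g 1) \<union> snd (g 2))"

primrec GG :: "nat \<Rightarrow> (blk set \<Rightarrow> blk) \<Rightarrow> nat \<Rightarrow> nat \<Rightarrow> hst \<times> msg set" where
  "GG \<Delta> tb 0 = (\<lambda>v. hstep \<Delta> tb (\<lambda>_. 0) v True 0 {} hinit)"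
| "GG \<Delta> tb (Suc r) = (\<lambda>v. hstep \<Delta> tb (\<lambda>_. 0) v True (Suc r) (deliv \<Delta> r (GG \<Delta> tb r)) (fst (GG \<Delta> tb r v)))"

definition rcv :: "nat \<Rightarrow> (blk set \<Rightarrow> blk) \<Rightarrow> nat \<Rightarrow> msg set" where
  "rcv \<Delta> tb r = (case r of 0 \<Rightarrow> {} | Suc r' \<Rightarrow> deliv \<Delta> r' (GG \<Delta> tb r'))"

definition sentf :: "nat \<Rightarrow> (blk set \<Rightarrow> blk) \<Rightarrow> nat \<Rightarrow> nat \<Rightarrow> msg set" where
  "sentf \<Delta> tb v r = (if v = 0 then (if r = 0 then snd (GG \<Delta> tb 0 0) else advs \<Delta> r)
                      else if v < 3 then snd (GG \<Delta> tb r v) else {})"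

definition EE :: "nat \<Rightarrow> (blk set \<Rightarrow> blk) \<Rightarrow> exec" where
  "EE \<Delta> tb = \<lparr>lead = \<lambda>_. 0, corr = \<lambda>v. if v = 0 then Some 1 else None, awake = \<lambda>_ _. True,
               sent = sentf \<Delta> tb, recv = \<lambda>v r. rcv \<Delta> tb r\<rparr>"

lemma GG_step: "GG \<Delta> tb r v = hstep \<Delta> tb (\<lambda>_. 0) v True r (rcv \<Delta> tb r)
                   (if r = 0 then hinit else fst (GG \<Delta> tb (r - 1) v))"
  by (cases r) (auto simp: rcv_def)

lemma active_EE: "active \<Delta> (EE \<Delta> tb) v r"
  unfolding active_def EE_def by auto

lemma hist_EE: "hist (EE \<Delta> tb) \<Delta> tb v r = GG \<Delta> tb r v"
proof -
  have act: "active \<Delta> (EE \<Delta> tb) v = (\<lambda>_. True)" by (simp add: fun_eq_iff active_EE)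
  have rc: "recv (EE \<Delta> tb) v = rcv \<Delta> tb" by (simp add: EE_def)
  have ld: "lead (EE \<Delta> tb) = (\<lambda>_. 0)" by (simp add: EE_def)
  show ?thesis unfolding hist_def act rc ld
  proof (induction r)
    case 0 then show ?case by (simp add: rcv_def)
  next
    case (Suc r) then show ?case by (simp add: rcv_def)
  qed
qed

lemma adv_EE: "adv_at (EE \<Delta> tb) 3 r = (if 1 \<le> r then {0} else {})"
  unfolding adv_at_def EE_def by auto

lemma honest_EE: "honest_at (EE \<Delta> tb) 3 v r \<longleftrightarrow> v < 3 \<and> (v = 0 \<longrightarrow> r = 0)"
  unfolding honest_at_def adv_EE by auto

lemma ghost_empty: "ghost_eph tb {} t = []"
proof -
  have bt: "block_tree {} = {[]}" unfolding block_tree_def by simp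
  have "children {} [] = {}" unfolding children_def bt by simp
  then show ?thesis unfolding ghost_eph_def bt by simp
qed

lemma G00: "0 < \<Delta> \<Longrightarrow> snd (GG \<Delta> tb 0 0) = {Prop [(0,0)] {Blk [(0,0)]}}"
  by (simp add: hstep_def Let_def ghost_empty hinit_def)

lemma G_out:
  assumes "v \<noteq> 0"
  shows "snd (GG \<Delta> tb r v) \<subseteq> {Basic (Vt v (r div (3*\<Delta>)) c) | c. True}"
    and "r mod (3*\<Delta>) \<noteq> \<Delta> \<Longrightarrow> snd (GG \<Delta> tb r v) = {}"
  using hs_out[of "\<lambda>_. 0" r \<Delta> v] assms unfolding GG_step[of \<Delta> tb r v] by auto


definition RR :: "nat \<Rightarrow> (blk set \<Rightarrow> blk) \<Rightarrow> nat \<Rightarrow> bmsg set" where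
  "RR \<Delta> tb r = {x. \<exists>r' \<le> r. x \<in> \<Union> (content ` rcv \<Delta> tb r')}"

lemma RR_Suc: "RR \<Delta> tb (Suc r) = RR \<Delta> tb r \<union> \<Union> (content ` rcv \<Delta> tb (Suc r))"
  unfolding RR_def by (auto simp: le_Suc_eq)

lemma RR_mono: "r \<le> r' \<Longrightarrow> RR \<Delta> tb r \<subseteq> RR \<Delta> tb r'"
  unfolding RR_def by (blast intro: le_trans)

lemma inv_union:
  assumes "v \<noteq> 0"
  shows "hview (fst (GG \<Delta> tb r v)) \<union> hbuf (fst (GG \<Delta> tb r v)) = RR \<Delta> tb r"
proof (induction r)
  case 0
  have "RR \<Delta> tb 0 = {}" unfolding RR_def rcv_def by simp
  then show ?case using hs_union[of "\<lambda>_. 0" 0 \<Delta> v tb "{}" hinit] assms by (simp add: hinit_def)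
next
  case (Suc r)
  have "GG \<Delta> tb (Suc r) v = hstep \<Delta> tb (\<lambda>_. 0) v True (Suc r) (rcv \<Delta> tb (Suc r)) (fst (GG \<Delta> tb r v))"
    using GG_step[of \<Delta> tb "Suc r" v] by simp
  then show ?case using hs_union[of "\<lambda>_. 0" "Suc r" \<Delta> v tb "rcv \<Delta> tb (Suc r)" "fst (GG \<Delta> tb r v)"]
      assms Suc RR_Suc by auto
qed

lemma view_mono_Suc:
  assumes "v \<noteq> 0"
  shows "hview (fst (GG \<Delta> tb r v)) \<subseteq> hview (fst (GG \<Delta> tb (Suc r) v))"
  using hs_mono[of "\<lambda>_. 0" "Suc r" \<Delta> v] assms by simp

lemma view_mono:
  assumes "v \<noteq> 0" "r \<le> r'"
  shows "hview (fst (GG \<Delta> tb r v)) \<subseteq> hview (fst (GG \<Delta> tb r' v))"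
  using assms(2)
proof (induction r' rule: dec_induct)
  case base then show ?case by simp
next
  case (step n) then show ?case using view_mono_Suc[OF assms(1), of \<Delta> tb n] by auto
qed

lemma view_merge:
  assumes "v \<noteq> 0" "r mod (3*\<Delta>) = 2*\<Delta>" "0 < \<Delta>"
  shows "hview (fst (GG \<Delta> tb r v)) = RR \<Delta> tb r"
proof (cases r)
  case 0 then show ?thesis using assms by simp
next
  case (Suc r0)
  have "GG \<Delta> tb (Suc r0) v = hstep \<Delta> tb (\<lambda>_. 0) v True (Suc r0) (rcv \<Delta> tb (Suc r0)) (fst (GG \<Delta> tb r0 v))"
    using GG_step[of \<Delta> tb "Suc r0" v] by simp
  then show ?thesis
    using hs_merge[of "\<lambda>_. 0" "Suc r0" \<Delta> v tb "rcv \<Delta> tb (Suc r0)" "fst (GG \<Delta> tb r0 v)"]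
      assms Suc inv_union[OF assms(1), of \<Delta> tb r0] RR_Suc[of \<Delta> tb r0] by auto
qed

lemma view_sub:
  assumes "v \<noteq> 0"
  shows "hview (fst (GG \<Delta> tb r v)) \<subseteq> RR \<Delta> tb r"
  using inv_union[OF assms] by blast

lemma prefix_single: "prefix b [x] \<longleftrightarrow> b = [] \<or> b = [x]"
  by (auto simp: prefix_Cons)

lemma ghost_lem:
  assumes tb: "\<And>S. finite S \<Longrightarrow> S \<noteq> {} \<Longrightarrow> tb S \<in> S"
    and P1: "\<And>y. Blk y \<in> V \<longleftrightarrow> y = [(0,0)] \<or> y = [(0,1)]"
    and P2: "\<And>u s c. Vt u s c \<in> V \<Longrightarrow> (s = 0 \<and> u \<noteq> 0) \<or> (u = 0 \<and> s = 1 \<and> c = [(0,1)])"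
    and P3: "Vt 0 1 [(0,1)] \<in> V"
  shows "ghost_eph tb V 2 = [(0,1)]"
proof -
  have bt: "block_tree V = {[], [(0,0)], [(0,1)]}"
  proof -
    have "{b. \<exists>b'. Blk b' \<in> V \<and> prefix b b'} = {b. \<exists>b'. (b' = [(0,0)] \<or> b' = [(0,1)]) \<and> prefix b b'}"
      using P1 by blast
    also have "\<dots> = {[], [(0,0)], [(0,1)]}" by (auto simp: prefix_single)
    finally show ?thesis unfolding block_tree_def by auto
  qed
  have card: "card (block_tree V) = Suc (Suc (Suc 0))" unfolding bt by simp
  have ch0: "children V [] = {[(0,0)], [(0,1)]}" unfolding children_def bt by auto
  have ch1: "children V [(0,1)] = {}" unfolding children_def bt by auto
  have eq: "0 \<notin> equivocators V"
  proof
    assume "0 \<in> equivocators V"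
    then obtain s b b' where "Vt 0 s b \<in> V" "Vt 0 s b' \<in> V" "b \<noteq> b'"
      unfolding equivocators_def votes_def by blast
    then show False using P2[of 0 s b] P2[of 0 s b'] by simp
  qed
  have ev: "eph_votes V 2 = {(0,1,[(0,1)])}"
  proof
    show "eph_votes V 2 \<subseteq> {(0,1,[(0,1)])}"
    proof
      fix x assume "x \<in> eph_votes V 2"
      then obtain u s c where x: "x = (u,s,c)" "Vt u s c \<in> V" "2 \<le> Suc s"
        unfolding eph_votes_def votes_def by blast
      then show "x \<in> {(0,1,[(0,1)])}" using P2[of u s c] by simp
    qed
    show "{(0,1,[(0,1)])} \<subseteq> eph_votes V 2"
      using P3 eq unfolding eph_votes_def votes_def by simp
  qed
  have w1: "weight V 2 [(0,1)] = 1"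
  proof -
    have "{(u, s, c). (u, s, c) \<in> eph_votes V 2 \<and> prefix [(0,1)] c} = {(0,1,[(0,1)])}"
      unfolding ev by auto
    then show ?thesis unfolding weight_def by simp
  qed
  have w0: "weight V 2 [(0,0)] = 0" unfolding weight_def ev by simp
  have hv: "heaviest V 2 [] = {[(0,1)]}" unfolding heaviest_def ch0 using w1 w0 by auto
  have tt: "tb {[(0,1)]} = [(0,1)]" using tb[of "{[(0,1)]}"] by simp
  show ?thesis unfolding ghost_eph_def card using ch0 ch1 hv tt by simp
qed

definition good :: "bmsg \<Rightarrow> bool" where
  "good x = (case x of Blk y \<Rightarrow> y = [(0,0)] \<or> y = [(0,1)]
     | Vt u s c \<Rightarrow> (s = 0 \<and> u \<noteq> 0) \<or> (u = 0 \<and> s = 1 \<and> c = [(0,1)]))"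

lemma divmod3:
  fixes \<Delta> q k :: nat
  assumes "0 < \<Delta>" "k < 3*\<Delta>"
  shows "(3*\<Delta>*q + k) div (3*\<Delta>) = q" "(3*\<Delta>*q + k) mod (3*\<Delta>) = k"
  using assms by simp_all

lemma slot0:
  fixes \<Delta> r :: nat
  assumes "0 < \<Delta>" "r < 7*\<Delta>" "r mod (3*\<Delta>) = \<Delta>" "r div (3*\<Delta>) \<noteq> 1"
  shows "r div (3*\<Delta>) = 0"
proof (rule ccontr)
  let ?q = "r div (3*\<Delta>)"
  assume "?q \<noteq> 0"
  then have q2: "2 \<le> ?q" using assms(4) by simp
  have "3*\<Delta>*?q + r mod (3*\<Delta>) = r" by simp
  moreover have "3*\<Delta>*2 \<le> 3*\<Delta>*?q" using q2 by (rule mult_le_mono2)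
  ultimately show False using assms(2,3) by linarith
qed

lemma rcv_good:
  assumes "0 < \<Delta>" "r < 7*\<Delta>" "x \<in> \<Union> (content ` rcv \<Delta> tb r)"
  shows "good x"
proof (cases r)
  case 0 then show ?thesis using assms by (simp add: rcv_def)
next
  case (Suc r0)
  then have r0: "r0 < 7*\<Delta>" using assms by simp
  from assms(3) obtain m where m: "m \<in> deliv \<Delta> r0 (GG \<Delta> tb r0)" "x \<in> content m"
    unfolding rcv_def Suc by auto
  show ?thesis
  proof (cases "r0 = 0 \<and> m \<in> snd (GG \<Delta> tb 0 0)")
    case True then show ?thesis using m G00[OF assms(1), of tb] by (auto simp: good_def)
  next
    case F1: False
    show ?thesis
    proof (cases "r0 \<noteq> 0 \<and> m \<in> advs \<Delta> r0")
      case True then show ?thesis using m by (auto simp: good_def advs_def split: if_splits)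
    next
      case False
      with F1 m obtain u where u: "u = 1 \<or> u = 2" "m \<in> snd (GG \<Delta> tb r0 u)" "r0 div (3*\<Delta>) \<noteq> 1"
        unfolding deliv_def by (auto split: if_splits)
      then have un: "u \<noteq> 0" by auto
      have "r0 mod (3*\<Delta>) = \<Delta>" using G_out(2)[OF un, of r0 \<Delta> tb] u(2) by auto
      then have s0: "r0 div (3*\<Delta>) = 0" using slot0[OF assms(1) r0 _ u(3)] by simp
      obtain c where "m = Basic (Vt u (r0 div (3*\<Delta>)) c)" using G_out(1)[OF un, of \<Delta> tb r0] u(2) by auto
      then show ?thesis using m s0 un by (simp add: good_def)
    qed
  qed
qed

lemma RR_good:
  assumes "0 < \<Delta>" "r < 7*\<Delta>" "x \<in> RR \<Delta> tb r"
  shows "good x"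
proof -
  obtain r' where "r' \<le> r" "x \<in> \<Union> (content ` rcv \<Delta> tb r')" using assms(3) unfolding RR_def by blast
  then show ?thesis using rcv_good[OF assms(1), of r' x tb] assms(2) by simp
qed

lemma RR_at: "r' \<le> r \<Longrightarrow> m \<in> rcv \<Delta> tb r' \<Longrightarrow> x \<in> content m \<Longrightarrow> x \<in> RR \<Delta> tb r"
  unfolding RR_def by blast

lemma rcv_Suc: "rcv \<Delta> tb (Suc r) = deliv \<Delta> r (GG \<Delta> tb r)"
  unfolding rcv_def by (simp only: nat.case)

lemma deliv_0: "snd (g 0) \<subseteq> deliv \<Delta> 0 g"
  unfolding deliv_def by (simp only: if_P[OF refl]) (rule Un_upper1)

lemma deliv_adv:
  assumes "r \<noteq> 0" shows "advs \<Delta> r \<subseteq> deliv \<Delta> r g"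
  unfolding deliv_def by (simp only: assms if_False) (rule Un_upper1)

lemma RR_low:
  assumes "0 < \<Delta>"
  shows "Blk [(0,0)] \<in> RR \<Delta> tb (5*\<Delta>)" "Blk [(0,1)] \<in> RR \<Delta> tb (5*\<Delta>)" "Vt 0 1 [(0,1)] \<in> RR \<Delta> tb (5*\<Delta>)"
proof -
  have rc: "Prop [(0,0)] {Blk [(0,0)]} \<in> rcv \<Delta> tb (Suc 0)"
    using G00[OF assms, of tb] deliv_0[of "GG \<Delta> tb 0" \<Delta>] unfolding rcv_Suc by blast
  have le: "Suc 0 \<le> 5*\<Delta>" using assms by simp
  have ct: "Blk [(0,0)] \<in> content (Prop [(0,0)] {Blk [(0,0)]})" by simp
  show "Blk [(0,0)] \<in> RR \<Delta> tb (5*\<Delta>)" by (rule RR_at[OF le rc ct])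
  have n0: "3*\<Delta> \<noteq> 0" using assms by simp
  have ad: "Basic (Blk [(0,1)]) \<in> advs \<Delta> (3*\<Delta>)" "Basic (Vt 0 1 [(0,1)]) \<in> advs \<Delta> (3*\<Delta>)"
    unfolding advs_def by simp_all
  have a: "Basic (Blk [(0,1)]) \<in> rcv \<Delta> tb (Suc (3*\<Delta>))" "Basic (Vt 0 1 [(0,1)]) \<in> rcv \<Delta> tb (Suc (3*\<Delta>))"
    using ad deliv_adv[OF n0, of \<Delta> "GG \<Delta> tb (3*\<Delta>)"] unfolding rcv_Suc by blast+
  have b: "Suc (3*\<Delta>) \<le> 5*\<Delta>" using assms by simp
  show "Blk [(0,1)] \<in> RR \<Delta> tb (5*\<Delta>)" by (rule RR_at[OF b a(1)]) simp
  show "Vt 0 1 [(0,1)] \<in> RR \<Delta> tb (5*\<Delta>)" by (rule RR_at[OF b a(2)]) simp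
qed

lemma chain_7:
  assumes tb: "\<And>S. finite S \<Longrightarrow> S \<noteq> {} \<Longrightarrow> tb S \<in> S" and D: "0 < \<Delta>"
  shows "hchain (fst (GG \<Delta> tb (7*\<Delta>) 1)) = Some [(0,1)]"
proof -
  define r0 where "r0 = 7*\<Delta> - 1"
  have r0s: "7*\<Delta> = Suc r0" unfolding r0_def using D by simp
  define V where "V = hview (fst (GG \<Delta> tb r0 1))"
  have st: "GG \<Delta> tb (7*\<Delta>) 1 = hstep \<Delta> tb (\<lambda>_. 0) 1 True (7*\<Delta>) (rcv \<Delta> tb (7*\<Delta>)) (fst (GG \<Delta> tb r0 1))"
    using GG_step[of \<Delta> tb "7*\<Delta>" 1] r0s by simp
  have dm: "(3*\<Delta>*2 + \<Delta>) div (3*\<Delta>) = 2" "(3*\<Delta>*2 + \<Delta>) mod (3*\<Delta>) = \<Delta>"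
    using divmod3[OF D, of \<Delta> 2] D by auto
  have e7: "3*\<Delta>*2 + \<Delta> = 7*\<Delta>" by simp
  have md: "(7*\<Delta>) mod (3*\<Delta>) = \<Delta>" "(7*\<Delta>) div (3*\<Delta>) = 2" using dm unfolding e7 by auto
  have basic: "\<forall>m\<in>rcv \<Delta> tb (7*\<Delta>). \<exists>x. m = Basic x"
  proof
    fix m assume "m \<in> rcv \<Delta> tb (7*\<Delta>)"
    then have m: "m \<in> deliv \<Delta> r0 (GG \<Delta> tb r0)" unfolding r0s rcv_def by simp
    have "r0 \<noteq> 0" unfolding r0_def using D by simp
    then show "\<exists>x. m = Basic x" using m G_out(1)[of 1 \<Delta> tb r0] G_out(1)[of 2 \<Delta> tb r0]
      unfolding deliv_def advs_def by (auto split: if_splits)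
  qed
  have hc: "hchain (fst (GG \<Delta> tb (7*\<Delta>) 1)) = Some (ghost_eph tb V 2)"
    unfolding st V_def using hs_vote[of "\<lambda>_. 0" "7*\<Delta>" \<Delta> 1 "rcv \<Delta> tb (7*\<Delta>)" tb "fst (GG \<Delta> tb r0 1)"]
      md basic by simp
  have m5: "(3*\<Delta>*1 + 2*\<Delta>) mod (3*\<Delta>) = 2*\<Delta>" using divmod3[OF D, of "2*\<Delta>" 1] D by auto
  have e5: "3*\<Delta>*1 + 2*\<Delta> = 5*\<Delta>" by simp
  have low: "RR \<Delta> tb (5*\<Delta>) \<subseteq> V"
  proof -
    have "hview (fst (GG \<Delta> tb (5*\<Delta>) 1)) = RR \<Delta> tb (5*\<Delta>)"
      using view_merge[of 1 "5*\<Delta>" \<Delta> tb] m5 D unfolding e5 by simp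
    moreover have "5*\<Delta> \<le> r0" unfolding r0_def using D by simp
    ultimately show ?thesis unfolding V_def using view_mono[of 1 "5*\<Delta>" r0 \<Delta> tb] by simp
  qed
  have up: "\<And>x. x \<in> V \<Longrightarrow> good x"
  proof -
    fix x assume "x \<in> V"
    then have "x \<in> RR \<Delta> tb r0" unfolding V_def using view_sub[of 1 \<Delta> tb r0] by auto
    moreover have "r0 < 7*\<Delta>" unfolding r0_def using D by simp
    ultimately show "good x" using RR_good[OF D] by blast
  qed
  have P1: "\<And>y. Blk y \<in> V \<longleftrightarrow> y = [(0,0)] \<or> y = [(0,1)]"
    using up[of "Blk _"] low RR_low[OF D, of tb] by (auto simp: good_def)
  have P2: "\<And>u s c. Vt u s c \<in> V \<Longrightarrow> (s = 0 \<and> u \<noteq> 0) \<or> (u = 0 \<and> s = 1 \<and> c = [(0,1)])"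
    using up by (force simp: good_def)
  have P3: "Vt 0 1 [(0,1)] \<in> V" using low RR_low[OF D, of tb] by auto
  show ?thesis using hc ghost_lem[OF tb P1 P2 P3] by simp
qed


lemma auth_b1:
  assumes "0 \<in> adv_at (EE \<Delta> tb) 3 r"
  shows "auth_block (EE \<Delta> tb) 3 \<Delta> r [(0,1)]"
  unfolding auth_block_def
proof (intro conjI allI impI)
  show "sorted_wrt (<) (map fst [(0::nat,1::nat)])" by simp
  fix q s x assume "prefix (q @ [(s, x)]) [(0::nat,1::nat)]"
  then have "q @ [(s,x)] = [(0,1)]" unfolding prefix_single by simp
  then have "s = 0" by (cases q) auto
  then show "(lead (EE \<Delta> tb) s \<in> adv_at (EE \<Delta> tb) 3 r \<and> 3*\<Delta>*s \<le> r) \<or>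
             q @ [(s, x)] \<in> honest_blocks_before (EE \<Delta> tb) 3 r"
    using assms by (simp add: EE_def)
qed

lemma sent_deliv:
  assumes "honest_at (EE \<Delta> tb) 3 u r" "r div (3*\<Delta>) \<noteq> 1"
  shows "sent (EE \<Delta> tb) u r \<subseteq> deliv \<Delta> r (GG \<Delta> tb r)"
proof -
  have h: "u = 0 \<and> r = 0 \<or> u = 1 \<or> u = 2" using assms(1) honest_EE by auto
  have s: "sent (EE \<Delta> tb) u r = sentf \<Delta> tb u r" by (simp add: EE_def)
  show ?thesis using h
  proof (elim disjE)
    assume "u = 0 \<and> r = 0" then show ?thesis unfolding s sentf_def deliv_def by simp
  next
    assume "u = 1" then show ?thesis unfolding s sentf_def deliv_def using assms(2) by auto
  next
    assume "u = 2" then show ?thesis unfolding s sentf_def deliv_def using assms(2) by auto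
  qed
qed

lemma adv_ok:
  assumes "v \<in> adv_at (EE \<Delta> tb) 3 r"
  shows "finite (sent (EE \<Delta> tb) v r) \<and> (\<forall>m \<in> sent (EE \<Delta> tb) v r. auth_msg (EE \<Delta> tb) 3 \<Delta> r m)"
proof -
  have vr: "v = 0" "1 \<le> r" using assms unfolding adv_EE by (auto split: if_splits)
  then have se: "sent (EE \<Delta> tb) v r = advs \<Delta> r" by (simp add: EE_def sentf_def)
  have adv3: "0 \<in> adv_at (EE \<Delta> tb) 3 r" using vr unfolding adv_EE by simp
  show "finite (sent (EE \<Delta> tb) v r) \<and> (\<forall>m \<in> sent (EE \<Delta> tb) v r. auth_msg (EE \<Delta> tb) 3 \<Delta> r m)"
  proof (cases "r = 3*\<Delta>")
    case True
    have ab: "auth_bmsg (EE \<Delta> tb) 3 \<Delta> r (Blk [(0,1)])" using auth_b1[OF adv3] by simp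
    have av: "auth_bmsg (EE \<Delta> tb) 3 \<Delta> r (Vt 0 1 [(0,1)])" using adv3 True by simp
    show ?thesis unfolding se advs_def using True ab av by simp
  next
    case False then show ?thesis unfolding se advs_def by simp
  qed
qed

lemma valid_EE:
  assumes D: "0 < \<Delta>"
  shows "valid_exec 3 \<Delta> tb 0 2 (EE \<Delta> tb)"
  unfolding valid_exec_def
proof (intro conjI allI impI)
  show "0 < \<Delta>" by (rule D)
  fix t show "lead (EE \<Delta> tb) t < 3" by (simp add: EE_def)
next
  fix v r :: nat assume "\<not> v < 3" then show "sent (EE \<Delta> tb) v r = {}" by (simp add: EE_def sentf_def)
next
  fix v r assume "honest_at (EE \<Delta> tb) 3 v r"
  then have "v < 3" "v = 0 \<longrightarrow> r = 0" using honest_EE by auto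
  then show "sent (EE \<Delta> tb) v r = snd (hist (EE \<Delta> tb) \<Delta> tb v r)"
    unfolding hist_EE by (simp add: EE_def sentf_def)
next
  fix v r assume "v \<in> adv_at (EE \<Delta> tb) 3 r"
  then show "finite (sent (EE \<Delta> tb) v r)" using adv_ok by blast
next
  fix v r assume "v \<in> adv_at (EE \<Delta> tb) 3 r"
  then show "\<forall>m \<in> sent (EE \<Delta> tb) v r. auth_msg (EE \<Delta> tb) 3 \<Delta> r m" using adv_ok by blast
next
  fix v r
  show "recv (EE \<Delta> tb) v r \<subseteq> {m. \<exists>u r'. r' < r \<and> m \<in> sent (EE \<Delta> tb) u r'}"
  proof (cases r)
    case 0 then show ?thesis by (simp add: EE_def rcv_def)
  next
    case (Suc r0)
    have "deliv \<Delta> r0 (GG \<Delta> tb r0) \<subseteq> sentf \<Delta> tb 0 r0 \<union> sentf \<Delta> tb 1 r0 \<union> sentf \<Delta> tb 2 r0"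
      unfolding deliv_def sentf_def by auto
    moreover have "recv (EE \<Delta> tb) v r = deliv \<Delta> r0 (GG \<Delta> tb r0)" unfolding Suc by (simp add: EE_def rcv_def)
    moreover have "\<And>u. sentf \<Delta> tb u r0 = sent (EE \<Delta> tb) u r0" by (simp add: EE_def)
    ultimately show ?thesis unfolding Suc by blast
  qed
next
  fix u r m v r'
  assume a: "honest_at (EE \<Delta> tb) 3 u r \<and> m \<in> sent (EE \<Delta> tb) u r \<and>
        \<not> (0 < r div (3*\<Delta>) \<and> r div (3*\<Delta>) < 2) \<and> v < 3 \<and> r + \<Delta> \<le> r' \<and> awake (EE \<Delta> tb) v r'"
  have nd: "r div (3*\<Delta>) \<noteq> 1" using a by auto
  have "m \<in> deliv \<Delta> r (GG \<Delta> tb r)" using sent_deliv[OF _ nd] a by blast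
  then have "m \<in> recv (EE \<Delta> tb) v (Suc r)" by (simp add: EE_def rcv_def)
  moreover have "Suc r \<le> r'" using a D by simp
  ultimately show "\<exists>r''. r < r'' \<and> r'' \<le> r' \<and> m \<in> recv (EE \<Delta> tb) v r''" by auto
qed

lemma Hset_EE: "0 < \<Delta> \<Longrightarrow> Hset (EE \<Delta> tb) 3 \<Delta> t = {1,2}"
  unfolding Hset_def honest_EE using active_EE by auto

lemma Aset_EE: "0 < \<Delta> \<Longrightarrow> Aset (EE \<Delta> tb) 3 \<Delta> t = {0}"
  unfolding Aset_def adv_EE by simp

lemma Hi_EE: "0 < \<Delta> \<Longrightarrow> Hi (EE \<Delta> tb) 3 \<Delta> i = (if i < 0 then {} else {1,2})"
  unfolding Hi_def using Hset_EE by simp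

lemma Hrange_EE: "0 < \<Delta> \<Longrightarrow> Hrange (EE \<Delta> tb) 3 \<Delta> lo hi \<subseteq> {1,2}"
  unfolding Hrange_def using Hi_EE by auto

lemma compliant_EE:
  assumes D: "0 < \<Delta>" and "2 \<le> \<pi>"
  shows "compliant 3 \<Delta> \<tau> \<pi> 0 2 (EE \<Delta> tb)"
  unfolding compliant_def
proof (intro conjI allI impI ballI)
  show "0 < (2::nat)" by simp
  show "2 - 0 \<le> \<pi>" using assms by simp
next
  fix t :: nat assume "0 < t \<and> \<not> (0 < t \<and> t \<le> 2)"
  then have t: "0 < t" by simp
  have hi: "Hi (EE \<Delta> tb) 3 \<Delta> (int t - 1) = {1,2}" using Hi_EE[OF D] t by simp
  have X: "Hrange (EE \<Delta> tb) 3 \<Delta> (int t - int \<tau>) (int t - 2) \<subseteq> {1,2}" using Hrange_EE[OF D] by blast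
  then have "Aset (EE \<Delta> tb) 3 \<Delta> t \<union> (Hrange (EE \<Delta> tb) 3 \<Delta> (int t - int \<tau>) (int t - 2) - Hi (EE \<Delta> tb) 3 \<Delta> (int t - 1)) = {0}"
    unfolding hi Aset_EE[OF D] by auto
  then show "sleepy (EE \<Delta> tb) 3 \<Delta> \<tau> t" unfolding sleepy_def hi by simp
next
  fix t :: nat
  have "Hrange (EE \<Delta> tb) 3 \<Delta> (int t - int \<tau>) (int t - 1) \<subseteq> {1,2}" using Hrange_EE[OF D] by blast
  then have "Aset (EE \<Delta> tb) 3 \<Delta> t \<union> (Hrange (EE \<Delta> tb) 3 \<Delta> (int t - int \<tau>) (int t - 1) - Hset (EE \<Delta> tb) 3 \<Delta> 0) = {0}"
    unfolding Hset_EE[OF D] Aset_EE[OF D] by auto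
  moreover have "card (Hset (EE \<Delta> tb) 3 \<Delta> 0 - Aset (EE \<Delta> tb) 3 \<Delta> t) = 2"
    unfolding Hset_EE[OF D] Aset_EE[OF D] by simp
  ultimately show "card (Hset (EE \<Delta> tb) 3 \<Delta> 0 - Aset (EE \<Delta> tb) 3 \<Delta> t) >
        card (Aset (EE \<Delta> tb) 3 \<Delta> t \<union> (Hrange (EE \<Delta> tb) 3 \<Delta> (int t - int \<tau>) (int t - 1) - Hset (EE \<Delta> tb) 3 \<Delta> 0))"
    by simp
next
  fix v show "awake (EE \<Delta> tb) v (3*\<Delta>*0 + 2*\<Delta>)" by (simp add: EE_def)
qed

lemma not_res_EE:
  assumes tb: "\<And>S. finite S \<Longrightarrow> S \<noteq> {} \<Longrightarrow> tb S \<in> S" and D: "0 < \<Delta>"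
  shows "\<not> async_resilient_exec 3 \<Delta> tb 0 2 (EE \<Delta> tb)"
proof -
  have hp: "honest_proposal (EE \<Delta> tb) 3 \<Delta> tb 0 [(0,0)]"
    unfolding honest_proposal_def hist_EE using honest_EE active_EE G00[OF D, of tb]
    by (simp add: EE_def)
  have dm: "(3*\<Delta>*2 + \<Delta>) div (3*\<Delta>) = 2" using divmod3[OF D, of \<Delta> 2] D by auto
  have e7: "3*\<Delta>*2 + \<Delta> = 7*\<Delta>" by simp
  have aw: "aware (EE \<Delta> tb) 3 \<Delta> 0 2 1 (7*\<Delta>)"
    unfolding aware_def using honest_EE active_EE Hset_EE[OF D] by simp
  have hc: "hchain (fst (hist (EE \<Delta> tb) \<Delta> tb 1 (7*\<Delta>))) = Some [(0,1)]"
    unfolding hist_EE using chain_7[OF tb D] .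
  have np: "\<not> prefix [(0::nat,0::nat)] [(0,1)]" by simp
  have le: "3*\<Delta>*0 + \<Delta> \<le> 7*\<Delta>" by simp
  show ?thesis unfolding async_resilient_exec_def
  proof
    assume H: "\<forall>t b v r c. t \<le> 0 \<and> honest_proposal (EE \<Delta> tb) 3 \<Delta> tb t b \<and> 3*\<Delta>*t + \<Delta> \<le> r \<and>
        aware (EE \<Delta> tb) 3 \<Delta> 0 2 v r \<and> hchain (fst (hist (EE \<Delta> tb) \<Delta> tb v r)) = Some c \<longrightarrow> prefix b c"
    have "prefix [(0::nat,0::nat)] [(0,1)]"
      using H[rule_format, of 0 "[(0,0)]" "7*\<Delta>" 1 "[(0,1)]"] hp aw hc le by blast
    then show False using np by simp
  qed
qed

theorem theorem4p4:
  fixes \<tau> \<pi> \<Delta> :: nat and tb :: "blk set \<Rightarrow> blk"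
  assumes "2 \<le> \<pi>" and "\<pi> < \<tau>" and "0 < \<Delta>"
    and "\<And>S. finite S \<Longrightarrow> S \<noteq> {} \<Longrightarrow> tb S \<in> S"
  shows "\<exists>n. \<not> goldfish_async_resilient n \<Delta> tb \<tau> \<pi>"
proof
  show "\<not> goldfish_async_resilient 3 \<Delta> tb \<tau> \<pi>"
    unfolding goldfish_async_resilient_def
    using valid_EE[OF assms(3), of tb] compliant_EE[OF assms(3) assms(1), of \<tau> tb]
      not_res_EE[OF assms(4) assms(3)] by blast
qed

end
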